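(* Let $r\ge 1$ and $s\ge 1$ be integers and $n\ge 1$. Let $\lambda=\lambda(T_r(n))$, $\mu=\lambda(\overline{K}_s\vee T_r(n))$ and $d_0=2\bigl(e(T_r(n))-1\bigr)/n$. Then \[ \frac{n(\mu+d_0)}{\mu^2-\lambda^2}<\frac{\mu}{s}. \]
   Context: $\lambda(\cdot)$ is the spectral radius of the adjacency matrix and $e(\cdot)$ the number of edges. $T_r(n)$ is the complete $r$-partite graph on $n$ vertices with part sizes differing by at most one (for $r=1$, the edgeless graph). $\overline{K}_s$ is the edgeless graph on $s$ vertices and $\vee$ denotes the join. *)

theory Defs
  imports "Jordan_Normal_Form.Spectral_Radius"
begin

text \<open>Simple graphs on vertex set {0..<N} given by a symmetric irreflexive adjacency
  predicate; the adjacency matrix is a complex N x N 0/1 matrix.\<close>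

definition adj_mat :: "nat \<Rightarrow> (nat \<Rightarrow> nat \<Rightarrow> bool) \<Rightarrow> complex mat" where
  "adj_mat N E = mat N N (\<lambda>(i,j). if E i j then 1 else 0)"

definition num_edges :: "nat \<Rightarrow> (nat \<Rightarrow> nat \<Rightarrow> bool) \<Rightarrow> nat" where
  "num_edges N E = card {(i,j). i < j \<and> j < N \<and> E i j}"

text \<open>Turan graph T_r(n) on {0..<n}: vertex i lies in part (i mod r); parts have sizes
  differing by at most one; two vertices are adjacent iff in different parts.\<close>
definition turan_adj :: "nat \<Rightarrow> nat \<Rightarrow> nat \<Rightarrow> bool" where
  "turan_adj r i j = (i mod r \<noteq> j mod r)"

text \<open>The join of the edgeless graph on s vertices {n..<n+s} with T_r(n) on {0..<n}.\<close>
definition join_turan_adj :: "nat \<Rightarrow> nat \<Rightarrow> nat \<Rightarrow> nat \<Rightarrow> bool" where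
  "join_turan_adj r n i j =
     ((i < n \<and> j < n \<and> turan_adj r i j) \<or> (i < n \<and> n \<le> j) \<or> (n \<le> i \<and> j < n))"

end

theory Submission
  imports Defs
begin


lemma cw_bound:
  fixes M :: "complex mat" and m :: "nat \<Rightarrow> nat \<Rightarrow> real" and x :: "nat \<Rightarrow> real"
  assumes M: "M \<in> carrier_mat N N"
  and Mm: "\<And>i j. i<N \<Longrightarrow> j<N \<Longrightarrow> M $$ (i,j) = complex_of_real (m i j)"
  and mpos: "\<And>i j. i<N \<Longrightarrow> j<N \<Longrightarrow> m i j \<ge> 0"
  and xpos: "\<And>i. i<N \<Longrightarrow> x i > 0"
  and eq: "\<And>i. i<N \<Longrightarrow> (\<Sum>j<N. m i j * x j) = c * x i"
  and ev: "eigenvalue M k"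
  shows "cmod k \<le> c"
proof -
  from ev obtain v where v: "v \<in> carrier_vec N" "v \<noteq> 0\<^sub>v N" "M *\<^sub>v v = k \<cdot>\<^sub>v v"
    unfolding eigenvalue_def eigenvector_def using M by auto
  have dv: "dim_vec v = N" using v(1) by auto
  obtain j0 where j0: "j0 < N" "v $ j0 \<noteq> 0"
    using v(1,2) by (metis carrier_vecD eq_vecI index_zero_vec(1) index_zero_vec(2))
  define R where "R i = cmod (v $ i) / x i" for i
  define Mx where "Mx = Max (R ` {..<N})"
  have fin: "finite (R ` {..<N})" by auto
  have ne: "R ` {..<N} \<noteq> {}" using j0 by auto
  obtain i0 where i0: "i0 < N" "R i0 = Mx" using Max_in[OF fin ne] unfolding Mx_def by auto
  have Rle: "R j \<le> R i0" if "j < N" for j using that i0(2) fin unfolding Mx_def by auto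
  have Rj0: "R j0 > 0" unfolding R_def using j0 xpos[OF j0(1)] by auto
  hence Rpos: "R i0 > 0" using Rle[OF j0(1)] by auto
  have vi0: "cmod (v $ i0) = R i0 * x i0" unfolding R_def using xpos[OF i0(1)] by auto
  have vj: "cmod (v $ j) \<le> R i0 * x j" if "j < N" for j
    using Rle[OF that] xpos[OF that] unfolding R_def by (simp add: divide_le_eq)
  have "k * v $ i0 = (M *\<^sub>v v) $ i0" using v(3) i0(1) dv by auto
  also have "\<dots> = (\<Sum>j<N. M $$ (i0,j) * v $ j)"
    using M i0(1) dv by (auto simp: scalar_prod_def atLeast0LessThan)
  finally have e1: "k * v $ i0 = (\<Sum>j<N. M $$ (i0,j) * v $ j)" .
  have "cmod k * cmod (v $ i0) = cmod (\<Sum>j<N. M $$ (i0,j) * v $ j)"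
    by (metis e1 norm_mult)
  also have "\<dots> \<le> (\<Sum>j<N. cmod (M $$ (i0,j) * v $ j))" by (rule norm_sum)
  also have "\<dots> = (\<Sum>j<N. m i0 j * cmod (v $ j))"
    by (rule sum.cong, simp, simp add: Mm[OF i0(1)] norm_mult mpos[OF i0(1)])
  also have "\<dots> \<le> (\<Sum>j<N. m i0 j * (R i0 * x j))"
    by (rule sum_mono, rule mult_left_mono, auto simp: vj mpos[OF i0(1)])
  also have "\<dots> = R i0 * (\<Sum>j<N. m i0 j * x j)"
    by (simp add: sum_distrib_left algebra_simps)
  also have "\<dots> = c * cmod (v $ i0)" using eq[OF i0(1)] vi0 by simp
  finally have "cmod k * cmod (v $ i0) \<le> c * cmod (v $ i0)" .
  moreover have "cmod (v $ i0) > 0" using vi0 Rpos xpos[OF i0(1)] by simp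
  ultimately show ?thesis by simp
qed

lemma sr_eq:
  fixes M :: "complex mat" and m :: "nat \<Rightarrow> nat \<Rightarrow> real" and x :: "nat \<Rightarrow> real"
  assumes M: "M \<in> carrier_mat N N" and N: "N > 0"
  and Mm: "\<And>i j. i<N \<Longrightarrow> j<N \<Longrightarrow> M $$ (i,j) = complex_of_real (m i j)"
  and mpos: "\<And>i j. i<N \<Longrightarrow> j<N \<Longrightarrow> m i j \<ge> 0"
  and xpos: "\<And>i. i<N \<Longrightarrow> x i > 0"
  and eq: "\<And>i. i<N \<Longrightarrow> (\<Sum>j<N. m i j * x j) = c * x i"
  shows "spectral_radius M = c"
proof -
  have "c * x 0 \<ge> 0" unfolding eq[OF N, symmetric]
    by (rule sum_nonneg, rule mult_nonneg_nonneg, auto intro: mpos less_imp_le[OF xpos] N)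
  hence c0: "c \<ge> 0" using xpos[OF N] by (simp add: zero_le_mult_iff)
  define w where "w = vec N (\<lambda>i. complex_of_real (x i))"
  have w0: "w \<noteq> 0\<^sub>v N" using xpos[OF N] N unfolding w_def
    by (metis index_vec index_zero_vec(1) less_irrefl of_real_eq_0_iff)
  have "M *\<^sub>v w = complex_of_real c \<cdot>\<^sub>v w"
  proof (rule eq_vecI)
    fix i assume i: "i < dim_vec (complex_of_real c \<cdot>\<^sub>v w)"
    hence i: "i < N" unfolding w_def by simp
    have "(M *\<^sub>v w) $ i = (\<Sum>j<N. M $$ (i,j) * w $ j)"
      using M i by (auto simp: scalar_prod_def atLeast0LessThan w_def)
    also have "\<dots> = (\<Sum>j<N. complex_of_real (m i j * x j))"
      by (rule sum.cong, auto simp: Mm[OF i] w_def)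
    also have "\<dots> = complex_of_real (c * x i)" unfolding of_real_sum[symmetric] eq[OF i] ..
    finally show "(M *\<^sub>v w) $ i = (complex_of_real c \<cdot>\<^sub>v w) $ i" using i by (simp add: w_def)
  qed (use M in \<open>auto simp: w_def\<close>)
  hence "eigenvalue M (complex_of_real c)" unfolding eigenvalue_def eigenvector_def
    using M w0 by (intro exI[of _ w], auto simp: w_def)
  hence "norm (complex_of_real c) \<in> norm ` spectrum M" unfolding spectrum_def by (intro imageI, simp)
  from spectral_radius_mem_max(2)[OF M N this] c0 have le: "c \<le> spectral_radius M" by simp
  from spectral_radius_mem_max(1)[OF M N] obtain k where k: "k \<in> spectrum M"
    "spectral_radius M = norm k" by auto
  have "norm k \<le> c" using cw_bound[OF M Mm mpos xpos eq] k(1) unfolding spectrum_def by auto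
  with le k(2) show ?thesis by simp
qed



lemma cnt_class:
  assumes r: "r > 0" and c: "c < r"
  shows "card {j. j < n \<and> j mod r = c} = n div r + (if c < n mod r then 1 else 0)"
proof (induction n)
  case 0 then show ?case by simp
next
  case (Suc n)
  have set: "{j. j < Suc n \<and> j mod r = c} = {j. j < n \<and> j mod r = c} \<union> (if n mod r = c then {n} else {})"
    by (auto simp: less_Suc_eq)
  have "card {j. j < Suc n \<and> j mod r = c} = card {j. j < n \<and> j mod r = c} + (if n mod r = c then 1 else 0)"
    unfolding set by (auto simp: card_insert_if)
  also have "\<dots> = n div r + (if c < n mod r then 1 else 0) + (if n mod r = c then 1 else 0)"
    using Suc by simp
  also have "\<dots> = Suc n div r + (if c < Suc n mod r then 1 else 0)"
  proof -
    have lt: "n mod r < r" using r by simp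
    show ?thesis
    proof (cases "Suc (n mod r) = r")
      case True
      then show ?thesis using c by (auto simp: div_Suc mod_Suc)
    next
      case False
      then show ?thesis using c lt by (auto simp: div_Suc mod_Suc)
    qed
  qed
  finally show ?case .
qed

lemma group_sum:
  fixes f :: "nat \<Rightarrow> real"
  assumes r: "r > 0"
  shows "(\<Sum>j<n. f (j mod r)) = (\<Sum>c<r. real (card {j. j < n \<and> j mod r = c}) * f c)"
proof -
  have "(\<Sum>j<n. f (j mod r)) = (\<Sum>c<r. sum (\<lambda>j. f (j mod r)) {x \<in> {..<n}. x mod r = c})"
    by (rule sum.group[symmetric], auto simp: r)
  also have "\<dots> = (\<Sum>c<r. real (card {j. j < n \<and> j mod r = c}) * f c)"
  proof (rule sum.cong[OF refl])
    fix c assume "c \<in> {..<r}"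
    have "sum (\<lambda>j. f (j mod r)) {x \<in> {..<n}. x mod r = c} = sum (\<lambda>j. f c) {x \<in> {..<n}. x mod r = c}"
      by (rule sum.cong, auto)
    also have "{x \<in> {..<n}. x mod r = c} = {j. j < n \<and> j mod r = c}" by auto
    finally show "sum (\<lambda>j. f (j mod r)) {x \<in> {..<n}. x mod r = c} = real (card {j. j < n \<and> j mod r = c}) * f c"
      by simp
  qed
  finally show ?thesis .
qed

lemma class_sum:
  fixes y :: real and n r c :: nat
  shows "(\<Sum>j<n. if j mod r = c then y else 0) = real (card {j. j < n \<and> j mod r = c}) * y"
proof -
  have "(\<Sum>j<n. if j mod r = c then y else 0) = (\<Sum>j\<in>{j. j < n \<and> j mod r = c}. y)"
  proof -
    have "(\<Sum>j\<in>{..<n} \<inter> {j. j mod r = c}. y) = (\<Sum>j<n. if j \<in> {j. j mod r = c} then y else 0)"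
      by (rule sum.inter_restrict) simp
    moreover have "{..<n} \<inter> {j. j mod r = c} = {j. j < n \<and> j mod r = c}" by auto
    ultimately show ?thesis by simp
  qed
  thus ?thesis by simp
qed

lemma split_classes:
  fixes g :: "nat \<Rightarrow> real"
  assumes "t \<le> r"
  shows "(\<Sum>c<r. g (q + (if c < t then 1 else 0))) = real t * g (q+1) + real (r - t) * g q"
proof -
  have "(\<Sum>c<r. g (q + (if c < t then 1 else 0))) = (\<Sum>c\<in>{0..<t}. g (q + (if c < t then 1 else 0))) + (\<Sum>c\<in>{t..<r}. g (q + (if c < t then 1 else 0)))"
  proof -
    have "{..<r} = {0..<t} \<union> {t..<r}" using assms by auto
    thus ?thesis by (simp add: sum.union_disjoint)
  qed
  also have "\<dots> = (\<Sum>c\<in>{0..<t}. g (q+1)) + (\<Sum>c\<in>{t..<r}. g q)"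
    by (intro arg_cong2[where f="(+)"] sum.cong, auto)
  finally show ?thesis by simp
qed



lemma core:
  fixes n q A B s L mu :: real
  assumes n1: "n \<ge> 1" and s1: "s \<ge> 1" and q0: "q \<ge> 0" and A0: "A \<ge> 0" and B0: "B \<ge> 0"
    and AB: "A + B = n"
    and hL: "L^2 - (n-1)*L - B = 0" and Lge: "L \<ge> n - 1" and Lle: "L \<le> n"
    and mu0: "mu > 0" and hM: "mu*(mu+q)*(mu+q+1) = (mu+s)*(n*(mu+q) + B)"
  shows "mu > L - q" "n*s*(mu + (n*(n-q) - A - 2)/n) < mu*(mu^2 - (L-q)^2)"
proof -
  define W where "W = mu + q"
  have W0: "W > 0" using mu0 q0 unfolding W_def by simp
  have hB: "B = L^2 - (n-1)*L" using hL by simp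
  have hA: "A = n - B" using AB by simp
  have e1: "s*(n*W+B) = mu*((W-L)*(W+L-n+1))"
  proof -
    have "s*(n*W+B) = mu*(W*W + W - n*W - B)" using hM unfolding W_def by (simp add: algebra_simps)
    also have "W*W + W - n*W - B = (W-L)*(W+L-n+1)" unfolding hB by (simp add: algebra_simps power2_eq_square)
    finally show ?thesis .
  qed
  have pos: "n*W + B > 0" using n1 W0 B0 by (smt (verit) mult_pos_pos)
  have "mu*((W-L)*(W+L-n+1)) > 0" using e1 pos s1 by (smt (verit) mult_pos_pos)
  hence "(W-L)*(W+L-n+1) > 0" using mu0 by (simp add: zero_less_mult_iff)
  moreover have "W+L-n+1 > 0" using W0 Lge by simp
  ultimately have WL: "W > L" by (simp add: zero_less_mult_iff)
  thus "mu > L - q" unfolding W_def by simp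
  define beta where "beta = L - n + 1"
  define D where "D = 2*W + beta*((beta-1)*(L+n-2*q) + A + 2)"
  define F where "F = mu*(mu^2 - (L-q)^2) - s*(n*mu + n*(n-q) - A - 2)"
  have idF: "F*(n*W+B) = mu*(W-L)*D"
  proof -
    have "F*(n*W+B) = mu*(mu^2 - (L-q)^2)*(n*W+B) - (s*(n*W+B))*(n*mu + n*(n-q) - A - 2)"
      unfolding F_def by (simp add: algebra_simps)
    also have "\<dots> = mu*(mu^2 - (L-q)^2)*(n*W+B) - (mu*((W-L)*(W+L-n+1)))*(n*mu + n*(n-q) - A - 2)"
      unfolding e1 ..
    also have "\<dots> = mu*(W-L)*D"
      unfolding D_def beta_def hA hB W_def by (simp add: algebra_simps power2_eq_square power3_eq_cube)
    finally show ?thesis .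
  qed
  have b0: "beta \<ge> 0" "beta \<le> 1" using Lge Lle unfolding beta_def by auto
  have X: "beta*(1-beta)*(L+n-2*q) \<le> beta*(1-beta)*(2*n)"
    by (rule mult_left_mono, use Lle q0 b0 in auto)
  have Y1: "2*(n-1) + 2*beta - beta*(1-beta)*(2*n) = 2*(n-1)*(1-beta+beta^2) + 2*beta^2"
    by (simp add: algebra_simps power2_eq_square)
  have Y2: "2*(n-1)*(1-beta+beta^2) + 2*beta^2 \<ge> 0"
  proof -
    have "1-beta+beta^2 \<ge> 0" using b0 by (smt (verit) mult_nonneg_nonneg power2_eq_square)
    thus ?thesis using n1 by (simp add: mult_nonneg_nonneg)
  qed
  have Z: "beta*(A+2) \<ge> 0" using b0 A0 by simp
  have V: "2*W > 2*(n-1) + 2*beta" using WL unfolding beta_def by simp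
  have Deq: "D = 2*W + beta*(A+2) - beta*(1-beta)*(L+n-2*q)" unfolding D_def by (simp add: algebra_simps)
  have D0: "D > 0" unfolding Deq using X Y1 Y2 Z V by linarith
  have "F*(n*W+B) > 0" unfolding idF using mu0 WL D0 by simp
  hence F0: "F > 0" using pos by (simp add: zero_less_mult_iff)
  have "n*(mu + (n*(n-q) - A - 2)/n) = n*mu + n*(n-q) - A - 2" using n1 by (simp add: field_simps)
  hence "n*s*(mu + (n*(n-q) - A - 2)/n) = s*(n*mu + n*(n-q) - A - 2)"
    by (metis mult.commute mult.left_commute)
  thus "n*s*(mu + (n*(n-q) - A - 2)/n) < mu*(mu^2 - (L-q)^2)" using F0 unfolding F_def by linarith
qed



lemma pairs_card:
  fixes E :: "nat \<Rightarrow> nat \<Rightarrow> bool"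
  assumes sym: "\<And>i j. E i j = E j i" and irr: "\<And>i. \<not> E i i"
  shows "2 * num_edges N E = (\<Sum>i<N. card {j. j < N \<and> E i j})"
proof -
  define S1 where "S1 = {(i,j). i < j \<and> j < N \<and> E i j}"
  define S where "S = Sigma {..<N} (\<lambda>i. {j. j < N \<and> E i j})"
  have fin1: "finite S1" unfolding S1_def
    by (rule finite_subset[of _ "{..<N} \<times> {..<N}"], auto)
  have "S = S1 \<union> prod.swap ` S1" unfolding S_def S1_def
    using irr sym by (auto simp: image_iff) (metis linorder_neqE_nat)
  moreover have "S1 \<inter> prod.swap ` S1 = {}" unfolding S1_def by auto
  moreover have "card (prod.swap ` S1) = card S1" by (rule card_image) simp
  ultimately have "card S = 2 * card S1" using fin1 by (simp add: card_Un_disjoint)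
  moreover have "card S = (\<Sum>i<N. card {j. j < N \<and> E i j})" unfolding S_def
    by (rule card_SigmaI) auto
  ultimately show ?thesis unfolding num_edges_def S1_def by simp
qed


theorem lemma3p4:
  fixes r s n :: nat
  assumes "r \<ge> 1" and "s \<ge> 1" and "n \<ge> 1"
  defines "lam \<equiv> spectral_radius (adj_mat n (turan_adj r))"
      and "mu \<equiv> spectral_radius (adj_mat (n + s) (join_turan_adj r n))"
      and "d\<^sub>0 \<equiv> 2 * (real (num_edges n (turan_adj r)) - 1) / real n"
  shows "real n * (mu + d\<^sub>0) / (mu\<^sup>2 - lam\<^sup>2) < mu / real s"
proof -
  have n0: "n > 0" using assms(3) by simp
  have r0: "r > 0" and s1: "real s \<ge> 1" and n1: "real n \<ge> 1" using assms(1-3) by auto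
  define q where "q = n div r"
  define t where "t = n mod r"
  have tr: "t < r" unfolding t_def using r0 by simp
  have nqt: "n = r * q + t" unfolding q_def t_def by simp
  define sz where "sz c = card {j. j < n \<and> j mod r = c}" for c
  have szf: "sz c = q + (if c < t then 1 else 0)" if "c < r" for c
    unfolding sz_def q_def t_def using cnt_class[OF r0 that] by simp
  define Ar where "Ar = real t * (real q + 1)"
  define Br where "Br = real (r - t) * real q"
  have AB: "Ar + Br = real n"
  proof -
    have "real (r - t) = real r - real t" using tr by simp
    thus ?thesis unfolding Ar_def Br_def using nqt by (simp add: algebra_simps)
  qed
  have A0: "Ar \<ge> 0" and B0: "Br \<ge> 0" unfolding Ar_def Br_def by auto
  have SUMG: "(\<Sum>j<n. g (sz (j mod r))) = Ar * g (q+1) + Br * g q" for g :: "nat \<Rightarrow> real"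
  proof -
    have "(\<Sum>j<n. g (sz (j mod r))) = (\<Sum>c<r. real (sz c) * g (sz c))"
      using group_sum[OF r0, of "\<lambda>c. g (sz c)" n] unfolding sz_def by simp
    also have "\<dots> = (\<Sum>c<r. (\<lambda>m. real m * g m) (q + (if c < t then 1 else 0)))"
      by (rule sum.cong, auto simp: szf)
    also have "\<dots> = real t * (real (q+1) * g (q+1)) + real (r - t) * (real q * g q)"
      by (rule split_classes, use tr in simp)
    finally show ?thesis unfolding Ar_def Br_def by simp
  qed
  have szi: "sz (i mod r) = q \<or> sz (i mod r) = q + 1" if "i < n" for i
    using szf[of "i mod r"] r0 by auto
  have sz1: "sz (i mod r) \<ge> 1" if "i < n" for i
  proof -
    have "i \<in> {j. j < n \<and> j mod r = i mod r}" using that by simp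
    hence "{j. j < n \<and> j mod r = i mod r} \<noteq> {}" by blast
    moreover have "finite {j. j < n \<and> j mod r = i mod r}" by simp
    ultimately show ?thesis unfolding sz_def by (simp add: Suc_le_eq card_gt_0_iff)
  qed
  have szq: "Br > 0" if "i < n" "sz (i mod r) = q" for i
  proof -
    have "q \<ge> 1" using sz1[OF that(1)] that(2) by simp
    moreover have "\<not> i mod r < t" using szf[of "i mod r"] r0 that by auto
    have "r - t \<ge> 1" using tr by simp
    ultimately show ?thesis unfolding Br_def by simp
  qed
  define L where "L = ((real n - 1) + sqrt ((real n - 1)^2 + 4 * Br)) / 2"
  have sq: "(sqrt ((real n - 1)^2 + 4 * Br))^2 = (real n - 1)^2 + 4 * Br" using B0 by simp
  have hL: "L^2 - (real n - 1)*L - Br = 0"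
  proof -
    define S where "S = sqrt ((real n - 1)^2 + 4 * Br)"
    have "L^2 - (real n - 1)*L - Br = (S^2 - (real n - 1)^2)/4 - Br"
      unfolding L_def S_def[symmetric] by (simp add: power2_eq_square field_simps)
    also have "\<dots> = 0" using sq unfolding S_def[symmetric] by simp
    finally show ?thesis .
  qed
  have sqge: "sqrt ((real n - 1)^2 + 4 * Br) \<ge> real n - 1"
    using B0 n1 by (smt (verit) real_sqrt_abs real_sqrt_le_mono)
  have Lge: "L \<ge> real n - 1" unfolding L_def using sqge by simp
  have sqle: "sqrt ((real n - 1)^2 + 4 * Br) \<le> real n + 1"
  proof (rule real_le_lsqrt)
    show "(real n - 1)\<^sup>2 + 4 * Br \<le> (real n + 1)\<^sup>2" using AB A0 by (simp add: power2_eq_square algebra_simps)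
  qed (use B0 n1 in auto)
  have Lle: "L \<le> real n" unfolding L_def using sqle by simp
  have Lpos: "L > 0" if "Br > 0"
  proof (rule ccontr)
    assume "\<not> L > 0" hence "L = 0" using Lge n1 by simp
    thus False using hL that by simp
  qed
  define xT where "xT i = 1 / (L - real q + real (sz (i mod r)))" for i
  have dT: "L - real q + real (sz (i mod r)) > 0" if "i < n" for i
  proof -
    have L0: "L \<ge> 0" using Lge n1 by simp
    from szi[OF that] show ?thesis
    proof
      assume h: "sz (i mod r) = q"
      hence "L > 0" using szq[OF that h] Lpos by simp
      thus ?thesis using h by simp
    next
      assume h: "sz (i mod r) = q + 1"
      thus ?thesis using L0 by simp
    qed
  qed
  have XT: "(\<Sum>j<n. xT j) = 1"
  proof -
    have "(\<Sum>j<n. xT j) = Ar * (1 / (L + 1)) + Br * (1 / L)"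
      unfolding xT_def using SUMG[of "\<lambda>m. 1 / (L - real q + real m)"] by simp
    also have "\<dots> = 1"
    proof (cases "Br > 0")
      case True
      hence L0: "L > 0" by (rule Lpos)
      have "Ar * L + Br * (L + 1) = (Ar + Br) * L + Br" by (simp add: algebra_simps)
      also have "\<dots> = real n * L + Br" unfolding AB ..
      also have "\<dots> = L * (L + 1)" using hL by (simp add: power2_eq_square algebra_simps)
      finally have eqL: "Ar * L + Br * (L + 1) = L * (L + 1)" .
      have p: "L * (L + 1) > 0" using L0 by simp
      have "Ar * (1 / (L + 1)) + Br * (1 / L) = (Ar * L + Br * (L + 1)) / (L * (L + 1))"
        using L0 by (simp add: field_simps)
      also have "\<dots> = 1" unfolding eqL using p L0 by simp
      finally show ?thesis .
    next
      case False
      hence "Br = 0" using B0 by simp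
      hence "L = real n - 1" "Ar = real n" unfolding L_def using AB n1 by auto
      thus ?thesis using `Br = 0` n1 by simp
    qed
    finally show ?thesis .
  qed
  have lamv: "lam = L - real q"
    unfolding lam_def
  proof (rule sr_eq[where m="\<lambda>i j. if turan_adj r i j then 1 else 0" and x=xT])
    show "adj_mat n (turan_adj r) \<in> carrier_mat n n" unfolding adj_mat_def by simp
    show "0 < n" using assms(3) by simp
    fix i assume i: "i < n"
    show "0 < xT i" unfolding xT_def using dT[OF i] by simp
    have "(\<Sum>j<n. (if turan_adj r i j then 1 else 0) * xT j) = (\<Sum>j<n. xT j - (if j mod r = i mod r then xT i else 0))"
      by (rule sum.cong, auto simp: turan_adj_def xT_def)
    also have "\<dots> = 1 - real (sz (i mod r)) * xT i"
      unfolding sum_subtractf XT class_sum sz_def ..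
    also have "\<dots> = (L - real q) * xT i" using dT[OF i] unfolding xT_def by (simp add: field_simps)
    finally show "(\<Sum>j<n. (if turan_adj r i j then 1 else 0) * xT j) = (L - real q) * xT i" .
  qed (auto simp: adj_mat_def)
  have lam0: "lam \<ge> 0"
  proof -
    have "lam \<in> norm ` spectrum (adj_mat n (turan_adj r))" unfolding lam_def
      by (rule spectral_radius_mem_max(1)[of _ n], auto simp: adj_mat_def intro: n0)
    thus ?thesis by auto
  qed
  define k where "k y = y - (y + real s) * (Ar / (y + real q + 1) + Br / (y + real q))" for y
  define a where "a = 1 / (real q + 2)"
  define b where "b = real n + real s + 1"
  have a0: "a > 0" and a1: "a \<le> 1" unfolding a_def by auto
  have ab: "a \<le> b" using a1 unfolding b_def by simp
  have phi_lo: "Ar / (y + real q + 1) + Br / (y + real q) \<ge> real n / (y + real q + 1)" if "y > 0" for y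
  proof -
    have "Br / (y + real q) \<ge> Br / (y + real q + 1)" using B0 that by (simp add: frac_le)
    moreover have "real n / (y + real q + 1) = Ar / (y + real q + 1) + Br / (y + real q + 1)"
      by (simp add: AB[symmetric] add_divide_distrib)
    ultimately show ?thesis by linarith
  qed
  have phi_hi: "Ar / (y + real q + 1) + Br / (y + real q) \<le> real n / y" if "y > 0" for y
  proof -
    have "Br / (y + real q) \<le> Br / y" using B0 that by (simp add: frac_le)
    moreover have "Ar / (y + real q + 1) \<le> Ar / y" using A0 that by (simp add: frac_le)
    moreover have "real n / y = Ar / y + Br / y"
      by (simp add: AB[symmetric] add_divide_distrib)
    ultimately show ?thesis by linarith
  qed
  have ka: "k a \<le> 0"
  proof -
    have D: "a + real q + 1 > 0" using a0 by simp
    have aq: "a * (real q + 2) = 1" unfolding a_def by simp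
    have "a * (a + real q + 1) \<le> a * (real q + 2)"
      by (rule mult_left_mono, use a1 a0 in auto)
    hence h1: "a * (a + real q + 1) \<le> 1" using aq by simp
    have "1 * 1 \<le> real s * real n" by (rule mult_mono[OF s1 n1], auto)
    moreover have "a * real n \<ge> 0" using a0 by simp
    moreover have "(a + real s) * real n = a * real n + real s * real n" by (simp add: algebra_simps)
    ultimately have h2: "1 \<le> (a + real s) * real n" by linarith
    have "a = (a * (a + real q + 1)) / (a + real q + 1)" using D by simp
    also have "\<dots> \<le> ((a + real s) * real n) / (a + real q + 1)"
      by (rule divide_right_mono[OF _ less_imp_le[OF D]], use h1 h2 in linarith)
    also have "\<dots> = (a + real s) * (real n / (a + real q + 1))" by simp
    also have "\<dots> \<le> (a + real s) * (Ar / (a + real q + 1) + Br / (a + real q))"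
      by (rule mult_left_mono[OF phi_lo[OF a0]], use a0 in simp)
    finally show ?thesis unfolding k_def by simp
  qed
  have kb: "k b \<ge> 0"
  proof -
    have b0: "b > 0" unfolding b_def by simp
    have "(b + real s) * (Ar / (b + real q + 1) + Br / (b + real q)) \<le> (b + real s) * (real n / b)"
      by (rule mult_left_mono[OF phi_hi[OF b0]], use b0 in simp)
    also have "\<dots> \<le> b"
    proof -
      have "b * b - (b + real s) * real n = real n + real s * real s + 2 * real s + 1"
        unfolding b_def by (simp add: algebra_simps)
      moreover have "0 \<le> real n + real s * real s + 2 * real s + 1" by (intro add_nonneg_nonneg) auto
      ultimately have h: "(b + real s) * real n \<le> b * b" by linarith
      have "(b + real s) * (real n / b) = ((b + real s) * real n) / b" by simp
      also have "\<dots> \<le> (b * b) / b" by (rule divide_right_mono[OF h], use b0 in simp)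
      also have "\<dots> = b" using b0 by simp
      finally show ?thesis .
    qed
    finally show ?thesis unfolding k_def by simp
  qed
  have dpos: "y + real q \<noteq> 0" "y + real q + 1 \<noteq> 0" if "y \<in> {a..b}" for y
  proof -
    have "y > 0" using that a0 by simp
    hence yq: "y + real q > 0" by (simp add: add_pos_nonneg)
    thus "y + real q \<noteq> 0" "y + real q + 1 \<noteq> 0" by simp_all
  qed
  have "continuous_on {a..b} k" unfolding k_def
    by (intro continuous_intros) (auto dest: dpos)
  from IVT'[of k a 0 b, OF ka kb ab this] obtain m0 where m0: "m0 \<ge> a" "m0 \<le> b" "k m0 = 0" by auto
  have m0p: "m0 > 0" using m0 a0 by simp
  define al where "al = 1 + real s / m0"
  have phi_m: "al * (Ar / (m0 + real q + 1) + Br / (m0 + real q)) = 1"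
  proof -
    have "(m0 + real s) * (Ar / (m0 + real q + 1) + Br / (m0 + real q)) = m0" using m0(3) unfolding k_def by simp
    moreover have "al = (m0 + real s) / m0" unfolding al_def using m0p by (simp add: field_simps)
    ultimately show ?thesis using m0p by simp
  qed
  define xJ where "xJ i = (if i < n then al / (m0 + real (sz (i mod r))) else 1 / m0)" for i
  have XJ: "(\<Sum>j<n. xJ j) = 1"
  proof -
    have "(\<Sum>j<n. xJ j) = (\<Sum>j<n. al / (m0 + real (sz (j mod r))))" unfolding xJ_def by simp
    also have "\<dots> = Ar * (al / (m0 + real q + 1)) + Br * (al / (m0 + real q))"
      using SUMG[of "\<lambda>m. al / (m0 + real m)"] by (simp add: add.assoc)
    also have "\<dots> = 1" using phi_m by (simp add: algebra_simps)
    finally show ?thesis .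
  qed
  have splitN: "(\<Sum>j<n+s. f j) = (\<Sum>j<n. f j) + (\<Sum>j\<in>{n..<n+s}. f j)" for f :: "nat \<Rightarrow> real"
  proof -
    have "{..<n+s} = {..<n} \<union> {n..<n+s}" by auto
    moreover have "{..<n} \<inter> {n..<n+s} = {}" by auto
    ultimately show ?thesis using sum.union_disjoint[of "{..<n}" "{n..<n+s}" f] by simp
  qed
  have muv: "mu = m0"
    unfolding mu_def
  proof (rule sr_eq[where m="\<lambda>i j. if join_turan_adj r n i j then 1 else 0" and x=xJ])
    show "adj_mat (n+s) (join_turan_adj r n) \<in> carrier_mat (n+s) (n+s)" unfolding adj_mat_def by simp
    show "0 < n + s" using assms(3) by simp
    fix i assume i: "i < n + s"
    show "0 < xJ i" unfolding xJ_def al_def using m0p by (auto intro!: divide_pos_pos add_pos_nonneg)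
    show "(\<Sum>j<n+s. (if join_turan_adj r n i j then 1 else 0) * xJ j) = m0 * xJ i"
    proof (cases "i < n")
      case iT: True
      have "(\<Sum>j<n. (if join_turan_adj r n i j then 1 else 0) * xJ j) = (\<Sum>j<n. xJ j - (if j mod r = i mod r then xJ i else 0))"
        using iT by (intro sum.cong) (auto simp: join_turan_adj_def turan_adj_def xJ_def)
      also have "\<dots> = 1 - real (sz (i mod r)) * xJ i"
        unfolding sum_subtractf XJ class_sum sz_def ..
      finally have s1': "(\<Sum>j<n. (if join_turan_adj r n i j then 1 else 0) * xJ j) = 1 - real (sz (i mod r)) * xJ i" .
      have s2: "(\<Sum>j\<in>{n..<n+s}. (if join_turan_adj r n i j then 1 else 0) * xJ j) = real s / m0"
        using iT by (simp add: join_turan_adj_def xJ_def)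
      have "1 - real (sz (i mod r)) * xJ i + real s / m0 = m0 * xJ i"
      proof -
        define z where "z = real (sz (i mod r))"
        define Z where "Z = m0 + z"
        have Z0: "Z > 0" unfolding Z_def z_def using m0p by (simp add: add_pos_nonneg)
        have xi: "xJ i = al / Z" using iT by (simp add: xJ_def Z_def z_def)
        have a1': "1 + real s / m0 = al" by (simp add: al_def)
        have g: "al - z * (al / Z) = m0 * (al / Z)"
        proof -
          have "al - z * (al / Z) = (al * Z - z * al) / Z" using Z0 by (simp add: field_simps)
          also have "al * Z - z * al = m0 * al" unfolding Z_def by (simp add: algebra_simps)
          finally show ?thesis by simp
        qed
        show ?thesis unfolding xi z_def[symmetric] using g a1' by linarith
      qed
      thus ?thesis unfolding splitN s1' s2 .
    next
      case iF: False
      have s1': "(\<Sum>j<n. (if join_turan_adj r n i j then 1 else 0) * xJ j) = 1"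
        using iF XJ by (simp add: join_turan_adj_def)
      have s2: "(\<Sum>j\<in>{n..<n+s}. (if join_turan_adj r n i j then 1 else 0) * xJ j) = 0"
        using iF by (simp add: join_turan_adj_def)
      show ?thesis unfolding splitN s1' s2 using iF m0p by (simp add: xJ_def)
    qed
  qed (auto simp: adj_mat_def)
  have hM: "m0 * (m0 + real q) * (m0 + real q + 1) = (m0 + real s) * (real n * (m0 + real q) + Br)"
  proof -
    have e: "(m0 + real s) * (Ar / (m0 + real q + 1) + Br / (m0 + real q)) = m0" using m0(3) unfolding k_def by simp
    have p1: "m0 + real q > 0" using m0p by simp
    define X where "X = m0 + real q"
    have X0: "X > 0" using p1 unfolding X_def .
    have fr: "Ar / (X + 1) + Br / X = (Ar * X + Br * (X + 1)) / (X * (X + 1))"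
      using X0 by (simp add: field_simps)
    have e': "(m0 + real s) * ((Ar * X + Br * (X + 1)) / (X * (X + 1))) = m0"
    proof -
      have "(m0 + real s) * (Ar / (X + 1) + Br / X) = m0" using e unfolding X_def .
      thus ?thesis unfolding fr .
    qed
    have XX: "X * (X + 1) > 0" using X0 by simp
    have "(m0 + real s) * (Ar * X + Br * (X + 1)) = m0 * (X * (X + 1))"
    proof -
      have "(m0 + real s) * (Ar * X + Br * (X + 1)) = ((m0 + real s) * ((Ar * X + Br * (X + 1)) / (X * (X + 1)))) * (X * (X + 1))"
        using XX X0 by simp
      thus ?thesis unfolding e' .
    qed
    hence "(m0 + real s) * (Ar * (m0 + real q) + Br * (m0 + real q + 1)) = m0 * (m0 + real q) * (m0 + real q + 1)"
      unfolding X_def by (simp add: mult.assoc add.assoc)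
    moreover have "Ar * (m0 + real q) + Br * (m0 + real q + 1) = (Ar + Br) * (m0 + real q) + Br"
      by (simp add: algebra_simps)
    hence "Ar * (m0 + real q) + Br * (m0 + real q + 1) = real n * (m0 + real q) + Br"
      unfolding AB .
    ultimately show ?thesis by simp
  qed
  have edges: "2 * real (num_edges n (turan_adj r)) = real n * (real n - real q) - Ar"
  proof -
    have "2 * num_edges n (turan_adj r) = (\<Sum>i<n. card {j. j < n \<and> turan_adj r i j})"
      by (rule pairs_card) (auto simp: turan_adj_def)
    hence "2 * real (num_edges n (turan_adj r)) = (\<Sum>i<n. real (card {j. j < n \<and> turan_adj r i j}))"
      by (metis of_nat_mult of_nat_numeral of_nat_sum)
    also have "\<dots> = (\<Sum>i<n. real n - real (sz (i mod r)))"
    proof (rule sum.cong[OF refl])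
      fix i
      have "{j. j < n \<and> turan_adj r i j} = {..<n} - {j. j < n \<and> j mod r = i mod r}"
        by (auto simp: turan_adj_def)
      moreover have "card ({..<n} - {j. j < n \<and> j mod r = i mod r}) = n - sz (i mod r)"
        unfolding sz_def by (subst card_Diff_subset) auto
      moreover have "sz (i mod r) \<le> n" unfolding sz_def
        by (rule order_trans[OF card_mono[of "{..<n}"]]) auto
      ultimately show "real (card {j. j < n \<and> turan_adj r i j}) = real n - real (sz (i mod r))"
        by simp
    qed
    also have "\<dots> = real n * real n - (\<Sum>i<n. real (sz (i mod r)))" by (simp add: sum_subtractf)
    also have "(\<Sum>i<n. real (sz (i mod r))) = Ar * (real q + 1) + Br * real q"
      using SUMG[of real] by simp
    finally have f: "2 * real (num_edges n (turan_adj r)) = real n * real n - (Ar * (real q + 1) + Br * real q)" .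
    have "Ar * (real q + 1) + Br * real q = (Ar + Br) * real q + Ar" by (simp add: algebra_simps)
    hence g: "Ar * (real q + 1) + Br * real q = real n * real q + Ar" unfolding AB .
    have h: "real n * (real n - real q) = real n * real n - real n * real q" by (simp add: algebra_simps)
    show ?thesis using f g h by linarith
  qed
  have d0v: "d\<^sub>0 = (real n * (real n - real q) - Ar - 2) / real n"
  proof -
    have "2 * (real (num_edges n (turan_adj r)) - 1) = 2 * real (num_edges n (turan_adj r)) - 2"
      by (simp add: algebra_simps)
    also have "\<dots> = real n * (real n - real q) - Ar - 2" unfolding edges ..
    finally have "2 * (real (num_edges n (turan_adj r)) - 1) = real n * (real n - real q) - Ar - 2" .
    thus ?thesis unfolding d\<^sub>0_def by simp
  qed
  have q0: "real q \<ge> 0" by simp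
  note C = core[OF n1 s1 q0 A0 B0 AB hL Lge Lle m0p hM]
  have gt: "mu > lam" using C(1) lamv muv by simp
  have "lam^2 < mu^2" by (rule power_strict_mono[OF gt lam0], simp)
  hence P: "mu^2 - lam^2 > 0" by simp
  have key: "real n * (mu + d\<^sub>0) * real s < mu * (mu^2 - lam^2)"
    using C(2) unfolding d0v lamv muv by (simp add: mult_ac)
  have Ps: "(mu^2 - lam^2) * real s > 0" using P s1 by simp
  have "real n * (mu + d\<^sub>0) / (mu\<^sup>2 - lam\<^sup>2) = (real n * (mu + d\<^sub>0) * real s) / ((mu^2 - lam^2) * real s)"
    using s1 by simp
  also have "\<dots> < (mu * (mu^2 - lam^2)) / ((mu^2 - lam^2) * real s)"
    by (rule divide_strict_right_mono[OF key Ps])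
  also have "\<dots> = mu / real s" using P by simp
  finally show ?thesis .
qed

end
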